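(* For every positive integer $n$ and odd $k\ge3$, $$\delta_kc_n^{\mathfrak a}=-\frac{T^k}{k}\big[n^k-(n-1)^k-1\big]c_n^{\mathfrak a}.$$
   Context: $\mathcal M^{(1)}=\mathbb Q[\zeta^{\mathfrak a}(3),\zeta^{\mathfrak a}(5),\dots]$ is the free polynomial subalgebra of depth-one motivic MZVs in $\mathcal A=\mathcal H/\zeta^{\mathfrak m}(2)\mathcal H$; $\zeta^{\mathfrak a}(k)=0$ for even $k$. For odd $k\ge3$, $\delta_k$ is the continuous $\mathbb Q((T))$-linear derivation $\partial/\partial\zeta^{\mathfrak a}(k)$ of $\mathcal M^{(1)}((T))$. $H^{\mathfrak a}(n)=(-1)^n\sum_{j\ge1}\binom{n+j-1}{n-1}\zeta^{\mathfrak a}(n+j)T^j$; $H^{\mathfrak a}(1^0)=1$, $H^{\mathfrak a}(1^n)=\frac1n\sum_{i=1}^n(-1)^{i-1}H^{\mathfrak a}(i)H^{\mathfrak a}(1^{n-i})$; $c_n^{\mathfrak a}=n\sum_{j\ge0}(n-1)^jT^jH^{\mathfrak a}(1^j)$. *)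

theory Defs
  imports "HOL-Library.Poly_Mapping" "HOL-Computational_Algebra.Formal_Power_Series"
begin

text \<open>The variable x_k (k odd, k >= 3) plays the role of zeta^a(k); the
  subalgebra generated by these is M^(1) (free polynomial algebra).\<close>
type_synonym mpoly = "(nat \<Rightarrow>\<^sub>0 nat) \<Rightarrow>\<^sub>0 rat"

definition mconst :: "rat \<Rightarrow> mpoly" where
  "mconst c = Poly_Mapping.single 0 c"

definition mvar :: "nat \<Rightarrow> mpoly" where
  "mvar k = Poly_Mapping.single (Poly_Mapping.single k 1) 1"

definition zeta_a :: "nat \<Rightarrow> mpoly" where
  "zeta_a k = (if odd k \<and> 3 \<le> k then mvar k else 0)"

definition pderiv_var :: "nat \<Rightarrow> mpoly \<Rightarrow> mpoly" where
  "pderiv_var k p =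
     (\<Sum>m\<in>Poly_Mapping.keys p. Poly_Mapping.single (m - Poly_Mapping.single k (1::nat))
                     (of_nat (Poly_Mapping.lookup (m :: nat \<Rightarrow>\<^sub>0 nat) k) * (Poly_Mapping.lookup p m :: rat)))"

text \<open>delta_k: the T-linear continuous derivation d/d zeta^a(k), acting coefficientwise.\<close>
definition delta :: "nat \<Rightarrow> mpoly fps \<Rightarrow> mpoly fps" where
  "delta k f = Abs_fps (\<lambda>j. pderiv_var k (fps_nth f j))"

definition Ha :: "nat \<Rightarrow> mpoly fps" where
  "Ha n = fps_const ((-1) ^ n) *
     Abs_fps (\<lambda>j. if j = 0 then 0 else of_nat ((n + j - 1) choose (n - 1)) * zeta_a (n + j))"

function Ha_ones :: "nat \<Rightarrow> mpoly fps" where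
  "Ha_ones n = (if n = 0 then 1 else
     fps_const (mconst (1 / of_nat n)) *
       (\<Sum>i\<in>{1..n}. fps_const ((-1) ^ (i - 1)) * Ha i * Ha_ones (n - i)))"
  by auto
termination by (relation "measure id") auto

definition c_a :: "nat \<Rightarrow> mpoly fps" where
  "c_a n = of_nat n * suminf (\<lambda>j::nat. of_nat ((n - 1) ^ j) * fps_X ^ j * Ha_ones j)"

end

theory Submission
  imports Defs
begin

unbundle fps_syntax



lemma pderiv_var_superset:
  assumes "finite S" "Poly_Mapping.keys p \<subseteq> S"
  shows "pderiv_var k p = (\<Sum>m\<in>S. Poly_Mapping.single (m - Poly_Mapping.single k (1::nat))
                     (of_nat (Poly_Mapping.lookup m k) * Poly_Mapping.lookup p m))"
  unfolding pderiv_var_def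
  by (rule sum.mono_neutral_left) (use assms in \<open>auto simp: in_keys_iff\<close>)

lemma pderiv_var_0 [simp]: "pderiv_var k 0 = 0"
  by (simp add: pderiv_var_def)

lemma pderiv_var_add: "pderiv_var k (p + q) = pderiv_var k p + pderiv_var k q"
  unfolding pderiv_var_def
  apply (rule setsum_keys_plus_distrib)
  apply simp
  apply (simp only: distrib_left single_add)
  done

lemma pderiv_var_sum: "pderiv_var k (sum f A) = (\<Sum>a\<in>A. pderiv_var k (f a))"
  by (induction A rule: infinite_finite_induct) (auto simp: pderiv_var_add)

lemma pderiv_var_single:
  "pderiv_var k (Poly_Mapping.single a c) =
     Poly_Mapping.single (a - Poly_Mapping.single k 1) (of_nat (Poly_Mapping.lookup a k) * c)"
  unfolding pderiv_var_def by simp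

lemma poly_mapping_monomials:
  "(p :: mpoly) = (\<Sum>a\<in>Poly_Mapping.keys p. Poly_Mapping.single a (Poly_Mapping.lookup p a))"
proof (rule poly_mapping_eqI)
  fix x
  have "Poly_Mapping.lookup (\<Sum>a\<in>Poly_Mapping.keys p. Poly_Mapping.single a (Poly_Mapping.lookup p a)) x
     = (\<Sum>a\<in>Poly_Mapping.keys p. if a = x then Poly_Mapping.lookup p a else 0)"
    by (simp add: lookup_sum lookup_single when_def)
  also have "\<dots> = Poly_Mapping.lookup p x"
    by (subst sum.delta) (auto simp: in_keys_iff)
  finally show "Poly_Mapping.lookup p x = Poly_Mapping.lookup (\<Sum>a\<in>Poly_Mapping.keys p. Poly_Mapping.single a (Poly_Mapping.lookup p a)) x" by simp
qed

lemma minus_single_add: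
  assumes "Poly_Mapping.lookup a k > 0"
  shows "a - Poly_Mapping.single k (1::nat) + b = a + b - Poly_Mapping.single k 1"
  by (rule poly_mapping_eqI) (use assms in \<open>auto simp: lookup_add lookup_minus lookup_single when_def\<close>)

lemma minus_single_add2:
  assumes "Poly_Mapping.lookup b k > 0"
  shows "a + (b - Poly_Mapping.single k (1::nat)) = a + b - Poly_Mapping.single k 1"
  by (rule poly_mapping_eqI) (use assms in \<open>auto simp: lookup_add lookup_minus lookup_single when_def\<close>)

lemma pderiv_var_mono_mult:
  "pderiv_var k (Poly_Mapping.single a c * Poly_Mapping.single b d :: mpoly) =
    pderiv_var k (Poly_Mapping.single a c) * Poly_Mapping.single b d +
    Poly_Mapping.single a c * pderiv_var k (Poly_Mapping.single b d)"
proof -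
  have 1: "pderiv_var k (Poly_Mapping.single a c) * Poly_Mapping.single b d =
     Poly_Mapping.single (a + b - Poly_Mapping.single k 1) (of_nat (Poly_Mapping.lookup a k) * c * d)"
  proof (cases "Poly_Mapping.lookup a k > 0")
    case True
    have eq: "a - Poly_Mapping.single k 1 + b = a + b - Poly_Mapping.single k 1"
      by (rule minus_single_add[OF True])
    show ?thesis unfolding pderiv_var_single mult_single eq by simp
  qed (simp add: pderiv_var_single mult_single)
  have 2: "Poly_Mapping.single a c * pderiv_var k (Poly_Mapping.single b d) =
     Poly_Mapping.single (a + b - Poly_Mapping.single k 1) (of_nat (Poly_Mapping.lookup b k) * c * d)"
  proof (cases "Poly_Mapping.lookup b k > 0")
    case True
    have eq: "a + (b - Poly_Mapping.single k 1) = a + b - Poly_Mapping.single k 1"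
      by (rule minus_single_add2[OF True])
    show ?thesis unfolding pderiv_var_single mult_single eq by (simp add: mult_ac)
  qed (simp add: pderiv_var_single mult_single)
  show ?thesis
    apply (subst 1, subst 2, subst single_add[symmetric])
    apply (simp only: mult_single pderiv_var_single lookup_add of_nat_add)
    apply (simp add: algebra_simps)
    done
qed

lemma pderiv_var_mult:
  "pderiv_var k (p * q :: mpoly) = pderiv_var k p * q + p * pderiv_var k q"
proof -
  let ?m = "\<lambda>r a. Poly_Mapping.single a (Poly_Mapping.lookup r a) :: mpoly"
  have P: "p = (\<Sum>a\<in>Poly_Mapping.keys p. ?m p a)" and Q: "q = (\<Sum>b\<in>Poly_Mapping.keys q. ?m q b)"
    by (rule poly_mapping_monomials)+
  have Pd: "pderiv_var k p = (\<Sum>a\<in>Poly_Mapping.keys p. pderiv_var k (?m p a))"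
    using arg_cong[OF P, of "pderiv_var k"] by (simp add: pderiv_var_sum)
  have Qd: "pderiv_var k q = (\<Sum>b\<in>Poly_Mapping.keys q. pderiv_var k (?m q b))"
    using arg_cong[OF Q, of "pderiv_var k"] by (simp add: pderiv_var_sum)
  have "p * q = (\<Sum>a\<in>Poly_Mapping.keys p. \<Sum>b\<in>Poly_Mapping.keys q. ?m p a * ?m q b)"
    by (subst P, subst Q) (simp add: sum_product)
  hence "pderiv_var k (p * q) = (\<Sum>a\<in>Poly_Mapping.keys p. \<Sum>b\<in>Poly_Mapping.keys q.
      pderiv_var k (?m p a) * ?m q b + ?m p a * pderiv_var k (?m q b))"
    by (simp add: pderiv_var_sum pderiv_var_mono_mult)
  also have "\<dots> = (\<Sum>a\<in>Poly_Mapping.keys p. pderiv_var k (?m p a)) * (\<Sum>b\<in>Poly_Mapping.keys q. ?m q b)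
      + (\<Sum>a\<in>Poly_Mapping.keys p. ?m p a) * (\<Sum>b\<in>Poly_Mapping.keys q. pderiv_var k (?m q b))"
    by (simp add: sum.distrib sum_product)
  also have "\<dots> = pderiv_var k p * q + p * pderiv_var k q"
    unfolding Pd[symmetric] Qd[symmetric] P[symmetric] Q[symmetric] ..
  finally show ?thesis .
qed





lemma mconst_mult: "mconst a * mconst b = mconst (a * b)"
  by (simp add: mconst_def mult_single)
lemma mconst_add: "mconst a + mconst b = mconst (a + b)"
  by (simp add: mconst_def single_add)
lemma mconst_uminus: "- mconst a = mconst (- a)"
  by (simp add: mconst_def single_uminus)
lemma mconst_1: "mconst 1 = 1" by (simp add: mconst_def)
lemma mconst_0: "mconst 0 = 0" by (simp add: mconst_def)
lemma of_nat_mconst: "(of_nat n :: mpoly) = mconst (of_nat n)"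
  by (simp add: mconst_def)
lemma neg_one_power_mconst: "((-1) ^ i :: mpoly) = mconst ((-1) ^ i)"
proof (induction i)
  case 0 then show ?case by (simp add: mconst_1)
next
  case (Suc i)
  have m1: "(-1::mpoly) = mconst (-1)" using mconst_uminus mconst_1 by metis
  show ?case
    apply (simp only: power_Suc Suc.IH)
    apply (subst m1)
    apply (simp add: mconst_mult)
    done
qed

lemma pderiv_var_mconst [simp]: "pderiv_var k (mconst c) = 0"
  by (simp add: mconst_def pderiv_var_single)

lemma pderiv_var_uminus: "pderiv_var k (- p) = - pderiv_var k p"
proof -
  have "pderiv_var k (- p) + pderiv_var k p = 0"
    by (simp add: pderiv_var_add[symmetric])
  thus ?thesis by (simp add: eq_neg_iff_add_eq_0)
qed

lemma pderiv_var_mconst_mult: "pderiv_var k (mconst c * p) = mconst c * pderiv_var k p"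
  by (simp add: pderiv_var_mult)

lemma pderiv_var_mvar: "pderiv_var k (mvar m) = (if m = k then 1 else 0)"
  by (auto simp: mvar_def pderiv_var_single lookup_single)

lemma pderiv_var_zeta_a:
  assumes "odd k" "3 \<le> k"
  shows "pderiv_var k (zeta_a m) = (if m = k then 1 else 0)"
  using assms by (auto simp: zeta_a_def pderiv_var_mvar)

lemma delta_nth [simp]: "delta k f $ j = pderiv_var k (f $ j)"
  by (simp add: delta_def)

lemma delta_add: "delta k (f + g) = delta k f + delta k g"
  by (simp add: fps_eq_iff pderiv_var_add)
lemma delta_0 [simp]: "delta k 0 = 0"
  by (simp add: fps_eq_iff)
lemma delta_uminus: "delta k (- f) = - delta k f"
  by (simp add: fps_eq_iff pderiv_var_uminus)
lemma delta_diff: "delta k (f - g) = delta k f - delta k g"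
  using delta_add[of k f "- g"] by (simp add: delta_uminus)
lemma delta_sum: "delta k (sum f A) = (\<Sum>a\<in>A. delta k (f a))"
  by (induction A rule: infinite_finite_induct) (auto simp: delta_add)

lemma delta_mult: "delta k (f * g) = delta k f * g + f * delta k g"
  by (simp add: fps_eq_iff fps_mult_nth pderiv_var_sum pderiv_var_mult sum.distrib)

lemma delta_cc [simp]: "delta k (fps_const (mconst c)) = 0"
  by (simp add: fps_eq_iff)

lemma delta_X [simp]: "delta k fps_X = 0"
  by (simp add: fps_eq_iff fps_X_def mconst_1[symmetric] del: pderiv_var_mconst)
     (simp add: mconst_1[symmetric])

lemma delta_X_power [simp]: "delta k (fps_X ^ m) = 0"
  by (induction m) (simp_all add: delta_mult mconst_1[symmetric] fps_const_1_eq_1[symmetric] del: fps_const_1_eq_1)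

lemma delta_cc_mult: "delta k (fps_const (mconst c) * f) = fps_const (mconst c) * delta k f"
  by (simp add: delta_mult)
lemma delta_X_power_mult: "delta k (fps_X ^ m * f) = fps_X ^ m * delta k f"
  by (simp add: delta_mult)

lemma delta_Ha:
  assumes "odd k" "3 \<le> k" "1 \<le> i"
  shows "delta k (Ha i) = (if i < k then fps_const (mconst ((-1) ^ i * of_nat ((k - 1) choose (i - 1)))) * fps_X ^ (k - i) else 0)"
proof (rule fps_ext)
  fix j
  have L: "delta k (Ha i) $ j = mconst ((-1) ^ i) * (if j = 0 then 0 else mconst (of_nat ((i + j - 1) choose (i - 1))) * (if i + j = k then 1 else 0))"
    by (simp add: Ha_def neg_one_power_mconst of_nat_mconst pderiv_var_mconst_mult pderiv_var_zeta_a[OF assms(1,2)])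
  show "delta k (Ha i) $ j = (if i < k then fps_const (mconst ((-1) ^ i * of_nat ((k - 1) choose (i - 1)))) * fps_X ^ (k - i) else 0) $ j"
    unfolding L using assms(3) by (auto simp: mconst_mult mconst_0)
qed





declare Ha_ones.simps[simp del]

abbreviation cc :: "rat \<Rightarrow> mpoly fps" where "cc r \<equiv> fps_const (mconst r)"

lemma cc_mult: "cc a * cc b = cc (a * b)" by (simp add: mconst_mult)
lemma cc_1: "cc 1 = 1" by (simp add: mconst_1)
lemma cc_add: "cc (a + b) = cc a + cc b" by (simp add: mconst_add)
lemma cc_add_mult: "cc a * F + cc b * F = cc (a + b) * F"
  by (simp only: cc_add distrib_right)
lemma of_nat_cc: "(of_nat m :: mpoly fps) = cc (of_nat m)"
  by (metis fps_of_nat of_nat_mconst)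

lemma Ha_ones_0: "Ha_ones 0 = 1" by (simp add: Ha_ones.simps)
lemma Ha_ones_rec: "0 < m \<Longrightarrow> Ha_ones m = cc (1 / of_nat m) *
    (\<Sum>i\<in>{1..m}. fps_const ((-1) ^ (i - 1)) * Ha i * Ha_ones (m - i))"
  by (subst Ha_ones.simps) simp

lemma Ha_ones_R: "of_nat m * Ha_ones m = (\<Sum>i\<in>{1..m}. fps_const ((-1) ^ (i - 1)) * Ha i * Ha_ones (m - i))"
proof (cases "m = 0")
  case True then show ?thesis by simp
next
  case False
  have "of_nat m * Ha_ones m = (cc (of_nat m) * cc (1 / of_nat m)) *
    (\<Sum>i\<in>{1..m}. fps_const ((-1) ^ (i - 1)) * Ha i * Ha_ones (m - i))"
    using False by (simp add: Ha_ones_rec of_nat_cc mult.assoc del: fps_const_mult)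
  also have "cc (of_nat m) * cc (1 / of_nat m) = 1"
    using False by (simp add: mconst_mult mconst_1)
  finally show ?thesis by simp
qed

definition bb :: "nat \<Rightarrow> nat \<Rightarrow> rat" where "bb k j = - of_nat (k choose j) / of_nat k"

lemma bb_prop: "0 < j \<Longrightarrow> 0 < k \<Longrightarrow> of_nat j * bb k j = - of_nat ((k - 1) choose (j - 1))"
proof -
  assume j: "0 < j" and k: "0 < k"
  have "of_nat j * of_nat (k choose j) = (of_nat k * of_nat ((k - 1) choose (j - 1)) :: rat)"
    using times_binomial_minus1_eq[OF j, of k] by (metis of_nat_mult)
  then show ?thesis using k by (simp add: bb_def field_simps)
qed

lemma sum_if_filter: "finite A \<Longrightarrow> {x\<in>A. P x} = B \<Longrightarrow> (\<Sum>x\<in>A. if P x then g x else 0) = sum g B"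
  by (metis sum.inter_filter)

lemma sign_lemma: "1 \<le> i \<Longrightarrow> (-1::rat) ^ (i - 1) * ((-1) ^ i * c) = - c"
  by (cases i) auto

lemma delta_Ha_ones:
  assumes k: "odd k" "3 \<le> k"
  shows "delta k (Ha_ones m) = (\<Sum>j\<in>{1..<k}. if j \<le> m then cc (bb k j) * fps_X ^ (k - j) * Ha_ones (m - j) else 0)"
proof (induction m rule: less_induct)
  case (less m)
  show ?case
  proof (cases "m = 0")
    case True
    have "(\<Sum>j\<in>{1..<k}. if j \<le> m then cc (bb k j) * fps_X ^ (k - j) * Ha_ones (m - j) else 0) = 0"
      by (rule sum.neutral) (use True in auto)
    moreover have "delta k (Ha_ones m) = 0"
      using True by (simp add: Ha_ones_0 cc_1[symmetric] del: fps_const_1_eq_1)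
    ultimately show ?thesis by simp
  next
    case False
    let ?s = "\<lambda>i. fps_const ((-1::mpoly) ^ (i - 1))"
    define S where "S = (\<Sum>i\<in>{1..m}. ?s i * Ha i * Ha_ones (m - i))"
    have eq: "Ha_ones m = cc (1 / of_nat m) * S" using Ha_ones_rec False S_def by simp
    have s_cc: "?s i = cc ((-1) ^ (i - 1))" for i by (simp add: neg_one_power_mconst)
    have dS: "delta k S = (\<Sum>i\<in>{1..m}. ?s i * delta k (Ha i) * Ha_ones (m - i))
        + (\<Sum>i\<in>{1..m}. ?s i * Ha i * delta k (Ha_ones (m - i)))"
      unfolding S_def s_cc by (simp add: delta_sum delta_mult sum.distrib algebra_simps)
    have A: "(\<Sum>i\<in>{1..m}. ?s i * delta k (Ha i) * Ha_ones (m - i)) =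
       (\<Sum>j\<in>{1..<k}. if j \<le> m then cc (- of_nat ((k - 1) choose (j - 1))) * fps_X ^ (k - j) * Ha_ones (m - j) else 0)"
    proof -
      have "(\<Sum>i\<in>{1..m}. ?s i * delta k (Ha i) * Ha_ones (m - i)) =
         (\<Sum>i\<in>{1..m}. if i < k then cc (- of_nat ((k - 1) choose (i - 1))) * fps_X ^ (k - i) * Ha_ones (m - i) else 0)"
      proof (rule sum.cong[OF refl])
        fix i assume i: "i \<in> {1..m}"
        have "?s i * delta k (Ha i) = (if i < k then cc (- of_nat ((k - 1) choose (i - 1))) * fps_X ^ (k - i) else 0)"
        proof (cases "i < k")
          case True
          have i1: "1 \<le> i" using i by simp
          have "?s i * delta k (Ha i) = cc ((-1) ^ (i - 1)) * (cc ((-1) ^ i * of_nat ((k - 1) choose (i - 1))) * fps_X ^ (k - i))"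
            by (simp only: s_cc delta_Ha[OF k i1] True if_True)
          also have "\<dots> = cc ((-1) ^ (i - 1) * ((-1) ^ i * of_nat ((k - 1) choose (i - 1)))) * fps_X ^ (k - i)"
            by (simp only: mult.assoc[symmetric] cc_mult)
          also have "\<dots> = cc (- of_nat ((k - 1) choose (i - 1))) * fps_X ^ (k - i)"
            by (simp only: sign_lemma[OF i1])
          finally show ?thesis using True by simp
        next
          case False
          have i1: "1 \<le> i" using i by simp
          show ?thesis using False by (simp add: delta_Ha[OF k i1])
        qed
        then show "?s i * delta k (Ha i) * Ha_ones (m - i) = (if i < k then cc (- of_nat ((k - 1) choose (i - 1))) * fps_X ^ (k - i) * Ha_ones (m - i) else 0)"
          by simp
      qed
      also have "\<dots> = (\<Sum>j\<in>{j\<in>{1..<k}. j \<le> m}. cc (- of_nat ((k - 1) choose (j - 1))) * fps_X ^ (k - j) * Ha_ones (m - j))"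
        by (rule sum_if_filter) auto
      also have "\<dots> = (\<Sum>j\<in>{1..<k}. if j \<le> m then cc (- of_nat ((k - 1) choose (j - 1))) * fps_X ^ (k - j) * Ha_ones (m - j) else 0)"
        by (rule sum_if_filter[symmetric]) auto
      finally show ?thesis .
    qed
    have B: "(\<Sum>i\<in>{1..m}. ?s i * Ha i * delta k (Ha_ones (m - i))) =
       (\<Sum>j\<in>{1..<k}. if j \<le> m then cc (bb k j * of_nat (m - j)) * fps_X ^ (k - j) * Ha_ones (m - j) else 0)"
    proof -
      have "(\<Sum>i\<in>{1..m}. ?s i * Ha i * delta k (Ha_ones (m - i))) =
         (\<Sum>i\<in>{1..m}. ?s i * Ha i * (\<Sum>j\<in>{1..<k}. if j \<le> m - i then cc (bb k j) * fps_X ^ (k - j) * Ha_ones (m - i - j) else 0))"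
      proof (rule sum.cong[OF refl])
        fix i assume i: "i \<in> {1..m}"
        then have "m - i < m" by auto
        then show "?s i * Ha i * delta k (Ha_ones (m - i)) = ?s i * Ha i * (\<Sum>j\<in>{1..<k}. if j \<le> m - i then cc (bb k j) * fps_X ^ (k - j) * Ha_ones (m - i - j) else 0)"
          using less.IH[of "m - i"] by simp
      qed
      also have "\<dots> = (\<Sum>i\<in>{1..m}. \<Sum>j\<in>{1..<k}. if j \<le> m - i then cc (bb k j) * fps_X ^ (k - j) * (?s i * Ha i * Ha_ones (m - j - i)) else 0)"
        by (rule sum.cong[OF refl], unfold sum_distrib_left, rule sum.cong[OF refl])
           (auto simp: mult_ac diff_commute add.commute)
      also have "\<dots> = (\<Sum>j\<in>{1..<k}. \<Sum>i\<in>{1..m}. if j \<le> m - i then cc (bb k j) * fps_X ^ (k - j) * (?s i * Ha i * Ha_ones (m - j - i)) else 0)"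
        by (rule sum.swap)
      also have "\<dots> = (\<Sum>j\<in>{1..<k}. cc (bb k j) * fps_X ^ (k - j) * (\<Sum>i\<in>{1..m - j}. ?s i * Ha i * Ha_ones (m - j - i)))"
      proof (rule sum.cong[OF refl])
        fix j assume j: "j \<in> {1..<k}"
        have "(\<Sum>i\<in>{1..m}. if j \<le> m - i then cc (bb k j) * fps_X ^ (k - j) * (?s i * Ha i * Ha_ones (m - j - i)) else 0)
            = (\<Sum>i\<in>{1..m - j}. cc (bb k j) * fps_X ^ (k - j) * (?s i * Ha i * Ha_ones (m - j - i)))"
          by (rule sum_if_filter) (use j in auto)
        then show "(\<Sum>i\<in>{1..m}. if j \<le> m - i then cc (bb k j) * fps_X ^ (k - j) * (?s i * Ha i * Ha_ones (m - j - i)) else 0)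
            = cc (bb k j) * fps_X ^ (k - j) * (\<Sum>i\<in>{1..m - j}. ?s i * Ha i * Ha_ones (m - j - i))"
          by (simp add: sum_distrib_left)
      qed
      also have "\<dots> = (\<Sum>j\<in>{1..<k}. cc (bb k j) * fps_X ^ (k - j) * (of_nat (m - j) * Ha_ones (m - j)))"
        by (simp only: Ha_ones_R)
      also have "\<dots> = (\<Sum>j\<in>{1..<k}. if j \<le> m then cc (bb k j * of_nat (m - j)) * fps_X ^ (k - j) * Ha_ones (m - j) else 0)"
      proof (rule sum.cong[OF refl])
        fix j assume j: "j \<in> {1..<k}"
        show "cc (bb k j) * fps_X ^ (k - j) * (of_nat (m - j) * Ha_ones (m - j)) =
           (if j \<le> m then cc (bb k j * of_nat (m - j)) * fps_X ^ (k - j) * Ha_ones (m - j) else 0)"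
        proof (cases "j \<le> m")
          case True
          have "cc (bb k j) * fps_X ^ (k - j) * (of_nat (m - j) * Ha_ones (m - j))
             = (cc (bb k j) * cc (of_nat (m - j))) * fps_X ^ (k - j) * Ha_ones (m - j)"
            by (simp only: of_nat_cc mult_ac)
          then show ?thesis using True by (simp only: cc_mult if_True)
        next
          case False
          then show ?thesis by simp
        qed
      qed
      finally show ?thesis .
    qed
    have comb: "delta k S = (\<Sum>j\<in>{1..<k}. if j \<le> m then cc (of_nat m * bb k j) * fps_X ^ (k - j) * Ha_ones (m - j) else 0)"
      unfolding dS A B sum.distrib[symmetric]
    proof (rule sum.cong[OF refl])
      fix j assume j: "j \<in> {1..<k}"
      show "(if j \<le> m then cc (- of_nat ((k - 1) choose (j - 1))) * fps_X ^ (k - j) * Ha_ones (m - j) else 0) +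
         (if j \<le> m then cc (bb k j * of_nat (m - j)) * fps_X ^ (k - j) * Ha_ones (m - j) else 0) =
         (if j \<le> m then cc (of_nat m * bb k j) * fps_X ^ (k - j) * Ha_ones (m - j) else 0)"
      proof (cases "j \<le> m")
        case True
        have "- of_nat ((k - 1) choose (j - 1)) + bb k j * of_nat (m - j) = of_nat m * bb k j"
          using bb_prop[of j k] j True k by (simp add: of_nat_diff algebra_simps)
        then show ?thesis using True by (simp only: if_True mult.assoc cc_add_mult)
      qed simp
    qed
    have "delta k (Ha_ones m) = cc (1 / of_nat m) * delta k S"
      unfolding eq by (rule delta_cc_mult)
    also have "\<dots> = (\<Sum>j\<in>{1..<k}. if j \<le> m then cc (bb k j) * fps_X ^ (k - j) * Ha_ones (m - j) else 0)"
      unfolding comb sum_distrib_left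
    proof (rule sum.cong[OF refl])
      fix j assume j: "j \<in> {1..<k}"
      have h: "cc (1 / of_nat m) * cc (of_nat m * bb k j) = cc (bb k j)"
        using False by (simp add: mconst_mult)
      then show "cc (1 / of_nat m) * (if j \<le> m then cc (of_nat m * bb k j) * fps_X ^ (k - j) * Ha_ones (m - j) else 0)
         = (if j \<le> m then cc (bb k j) * fps_X ^ (k - j) * Ha_ones (m - j) else 0)"
        by (cases "j \<le> m") (simp_all only: if_True if_False mult_zero_right mult.assoc[symmetric] h)
    qed
    finally show ?thesis .
  qed
qed





lemma cc_0: "cc 0 = 0" by (simp add: mconst_0)
lemma cc_diff: "cc (a - b) = cc a - cc b" by (simp add: mconst_def single_diff)
lemma cc_sum: "(\<Sum>i\<in>A. cc (g i)) = cc (\<Sum>i\<in>A. g i)"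
  by (induction A rule: infinite_finite_induct) (simp_all add: cc_0 cc_add)

definition agree :: "nat \<Rightarrow> mpoly fps \<Rightarrow> mpoly fps \<Rightarrow> bool" where
  "agree N F G \<longleftrightarrow> (\<forall>t\<le>N. F $ t = G $ t)"

lemma agree_refl: "agree N F F" by (simp add: agree_def)
lemma agree_sym: "agree N F G \<Longrightarrow> agree N G F" by (simp add: agree_def)
lemma agree_trans: "agree N F G \<Longrightarrow> agree N G H \<Longrightarrow> agree N F H" by (simp add: agree_def)
lemma agree_mult: "agree N F F' \<Longrightarrow> agree N G G' \<Longrightarrow> agree N (F * G) (F' * G')"
  unfolding agree_def fps_mult_nth by (auto intro!: sum.cong)
lemma agree_sum: "(\<And>a. a \<in> A \<Longrightarrow> agree N (F a) (G a)) \<Longrightarrow> agree N (sum F A) (sum G A)"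
  unfolding agree_def fps_sum_nth by (auto intro!: sum.cong)
lemma agree_delta: "agree N F G \<Longrightarrow> agree N (delta k F) (delta k G)"
  unfolding agree_def by simp
lemma agree_eq: "(\<And>N. agree N F G) \<Longrightarrow> F = G"
  unfolding agree_def by (auto intro!: fps_ext)

lemma sum_nth_reduce:
  assumes z: "\<And>j i. i < j \<Longrightarrow> f j $ i = (0::mpoly)" and "finite A" "{..t} \<subseteq> A"
  shows "(\<Sum>j\<in>A. f j $ t) = (\<Sum>j\<le>t. f j $ t)"
  by (rule sum.mono_neutral_right) (use assms in \<open>auto simp: not_le\<close>)

lemma suminf_nth:
  assumes z: "\<And>j i. i < j \<Longrightarrow> f j $ i = (0::mpoly)"
  shows "suminf f $ t = (\<Sum>j\<le>t. f j $ t)"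
proof -
  define S where "S = Abs_fps (\<lambda>t. \<Sum>j\<le>t. f j $ t)"
  have "f sums S" unfolding sums_def
  proof (rule tendsto_fpsI)
    fix t
    show "eventually (\<lambda>M. (\<Sum>j<M. f j) $ t = S $ t) sequentially"
    proof (rule eventually_sequentiallyI[of "Suc t"])
      fix M assume "Suc t \<le> M"
      then have sub: "{..t} \<subseteq> {..<M}" by auto
      show "(\<Sum>j<M. f j) $ t = S $ t"
        unfolding S_def fps_sum_nth using sum_nth_reduce[of f, OF z finite_lessThan sub] by simp
    qed
  qed
  then have "suminf f = S" by (rule sums_unique[symmetric])
  then show ?thesis by (simp add: S_def)
qed

lemma suminf_agree:
  assumes z: "\<And>j i. i < j \<Longrightarrow> f j $ i = (0::mpoly)" and "N \<le> M"
  shows "agree N (suminf f) (\<Sum>j\<le>M. f j)"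
  unfolding agree_def
proof (intro allI impI)
  fix t assume "t \<le> N"
  then have sub: "{..t} \<subseteq> {..M}" using assms(2) by auto
  show "suminf f $ t = (\<Sum>j\<le>M. f j) $ t"
    unfolding fps_sum_nth using suminf_nth[of f, OF z, of t] sum_nth_reduce[of f, OF z finite_atMost sub] by simp
qed

lemma reindex_shift:
  fixes g :: "nat \<Rightarrow> 'a::comm_monoid_add"
  assumes "i \<le> M"
  shows "(\<Sum>j\<le>M. if i \<le> j then g (j - i) else 0) = (\<Sum>j\<le>M - i. g j)"
proof -
  have "(\<Sum>j\<le>M. if i \<le> j then g (j - i) else 0) = (\<Sum>j\<in>{i..M}. g (j - i))"
    by (rule sum_if_filter) auto
  also have "\<dots> = (\<Sum>j\<in>{0 + i..(M - i) + i}. g (j - i))" using assms by simp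
  also have "\<dots> = (\<Sum>j\<in>{0..M - i}. g (j + i - i))" by (rule sum.shift_bounds_cl_nat_ivl)
  also have "\<dots> = (\<Sum>j\<le>M - i. g j)" by (simp add: atLeast0AtMost)
  finally show ?thesis .
qed

lemma binom_split:
  assumes "0 < k" "1 \<le> (n::nat)"
  shows "n ^ k = 1 + (n - 1) ^ k + (\<Sum>i\<in>{1..<k}. (k choose i) * (n - 1) ^ i)"
proof -
  have S: "{..k} = insert 0 (insert k {1..<k})" using assms by auto
  have "n ^ k = ((n - 1) + 1) ^ k" using assms by simp
  also have "\<dots> = (\<Sum>i\<le>k. of_nat (k choose i) * (n - 1) ^ i * 1 ^ (k - i))" by (rule binomial_ring)
  also have "\<dots> = (\<Sum>i\<in>insert 0 (insert k {1..<k}). of_nat (k choose i) * (n - 1) ^ i * 1 ^ (k - i))"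
    by (simp only: S)
  finally show ?thesis using assms by simp
qed

lemma coef_identity:
  assumes "0 < k" "1 \<le> (n::nat)"
  shows "(\<Sum>i\<in>{1..<k}. bb k i * of_nat ((n - 1) ^ i)) =
     - (1 / of_nat k * (of_nat (n ^ k) - of_nat ((n - 1) ^ k) - 1))"
proof -
  have "(of_nat (n ^ k) :: rat) = 1 + of_nat ((n - 1) ^ k) + (\<Sum>i\<in>{1..<k}. of_nat (k choose i) * of_nat ((n - 1) ^ i))"
    by (subst binom_split[OF assms]) simp
  then have "(of_nat (n ^ k) :: rat) - of_nat ((n - 1) ^ k) - 1 = (\<Sum>i\<in>{1..<k}. of_nat (k choose i) * of_nat ((n - 1) ^ i))"
    by simp
  then show ?thesis using assms
    by (simp add: bb_def sum_divide_distrib[symmetric] sum_negf)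
qed





lemma f_zero:
  "i < j \<Longrightarrow> (of_nat ((n - 1) ^ j) * fps_X ^ j * Ha_ones j :: mpoly fps) $ i = 0"
  by (simp add: fps_of_nat[symmetric] mult.assoc fps_X_power_mult_nth)

lemma delta_f:
  assumes k: "odd k" "3 \<le> k"
  shows "delta k (of_nat ((n - 1) ^ j) * fps_X ^ j * Ha_ones j) =
    (\<Sum>i\<in>{1..<k}. if i \<le> j then cc (bb k i * of_nat ((n - 1) ^ i)) * fps_X ^ k *
        (of_nat ((n - 1) ^ (j - i)) * fps_X ^ (j - i) * Ha_ones (j - i)) else 0)"
proof -
  have "delta k (of_nat ((n - 1) ^ j) * fps_X ^ j * Ha_ones j) = cc (of_nat ((n - 1) ^ j)) * (fps_X ^ j * delta k (Ha_ones j))"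
    by (simp only: of_nat_cc mult.assoc delta_cc_mult delta_X_power_mult)
  also have "\<dots> = (\<Sum>i\<in>{1..<k}. cc (of_nat ((n - 1) ^ j)) * (fps_X ^ j * (if i \<le> j then cc (bb k i) * fps_X ^ (k - i) * Ha_ones (j - i) else 0)))"
    by (simp only: delta_Ha_ones[OF k] sum_distrib_left)
  also have "\<dots> = (\<Sum>i\<in>{1..<k}. if i \<le> j then cc (bb k i * of_nat ((n - 1) ^ i)) * fps_X ^ k *
        (of_nat ((n - 1) ^ (j - i)) * fps_X ^ (j - i) * Ha_ones (j - i)) else 0)"
  proof (rule sum.cong[OF refl])
    fix i assume i: "i \<in> {1..<k}"
    show "cc (of_nat ((n - 1) ^ j)) * (fps_X ^ j * (if i \<le> j then cc (bb k i) * fps_X ^ (k - i) * Ha_ones (j - i) else 0)) =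
      (if i \<le> j then cc (bb k i * of_nat ((n - 1) ^ i)) * fps_X ^ k *
        (of_nat ((n - 1) ^ (j - i)) * fps_X ^ (j - i) * Ha_ones (j - i)) else 0)"
    proof (cases "i \<le> j")
      case True
      have X1: "(fps_X::mpoly fps) ^ j = fps_X ^ i * fps_X ^ (j - i)"
        using True by (simp add: power_add[symmetric])
      have X2: "(fps_X::mpoly fps) ^ k = fps_X ^ i * fps_X ^ (k - i)"
        using i by (simp add: power_add[symmetric])
      have P1: "(of_nat ((n - 1) ^ j) :: rat) = of_nat ((n - 1) ^ i) * of_nat ((n - 1) ^ (j - i))"
        using True by (simp add: power_add[symmetric])
      show ?thesis using True
        apply (simp only: if_True X1 X2 P1 cc_mult[symmetric] of_nat_cc)
        apply (simp only: mult_ac)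
        done
    qed simp
  qed
  finally show ?thesis .
qed

theorem mainTheorem9:
  fixes n k :: nat
  assumes "0 < n" and "odd k" and "3 \<le> k"
  shows "delta k (c_a n) =
    - (fps_const (mconst (1 / of_nat k)) * fps_X ^ k *
        (of_nat (n ^ k) - of_nat ((n - 1) ^ k) - 1)) * c_a n"
proof -
  define f where "f = (\<lambda>j::nat. of_nat ((n - 1) ^ j) * fps_X ^ j * Ha_ones j :: mpoly fps)"
  have z: "\<And>j i. i < j \<Longrightarrow> f j $ i = 0" unfolding f_def by (rule f_zero)
  have cdef: "c_a n = of_nat n * suminf f" unfolding c_a_def f_def ..
  define C where "C i = cc (bb k i * of_nat ((n - 1) ^ i))" for i
  have dP: "delta k (\<Sum>j\<le>M. f j) = (\<Sum>i\<in>{1..<k}. C i * fps_X ^ k * (\<Sum>j\<le>M - i. f j))" if "k \<le> M" for M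
  proof -
    have "delta k (\<Sum>j\<le>M. f j) = (\<Sum>j\<le>M. \<Sum>i\<in>{1..<k}. if i \<le> j then C i * fps_X ^ k * f (j - i) else 0)"
      unfolding delta_sum f_def C_def by (simp only: delta_f[OF assms(2,3)])
    also have "\<dots> = (\<Sum>i\<in>{1..<k}. \<Sum>j\<le>M. if i \<le> j then C i * fps_X ^ k * f (j - i) else 0)"
      by (rule sum.swap)
    also have "\<dots> = (\<Sum>i\<in>{1..<k}. C i * fps_X ^ k * (\<Sum>j\<le>M - i. f j))"
    proof (rule sum.cong[OF refl])
      fix i assume i: "i \<in> {1..<k}"
      have iM: "i \<le> M" using i that by auto
      have "(\<Sum>j\<le>M. if i \<le> j then C i * fps_X ^ k * f (j - i) else 0) = (\<Sum>j\<le>M - i. C i * fps_X ^ k * f j)"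
        using reindex_shift[OF iM, of "\<lambda>j. C i * fps_X ^ k * f j"] by simp
      then show "(\<Sum>j\<le>M. if i \<le> j then C i * fps_X ^ k * f (j - i) else 0) = C i * fps_X ^ k * (\<Sum>j\<le>M - i. f j)"
        by (simp add: sum_distrib_left)
    qed
    finally show ?thesis .
  qed
  have key: "of_nat n * (\<Sum>i\<in>{1..<k}. C i * fps_X ^ k * suminf f) =
     - (cc (1 / of_nat k) * fps_X ^ k * (of_nat (n ^ k) - of_nat ((n - 1) ^ k) - 1)) * (of_nat n * suminf f)"
  proof -
    let ?d = "(of_nat (n ^ k) - of_nat ((n - 1) ^ k) - 1 :: rat)"
    have k0: "0 < k" using assms by simp
    have n1: "1 \<le> n" using assms by simp
    have s: "(\<Sum>i\<in>{1..<k}. C i) = cc (- (1 / of_nat k * ?d))"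
      unfolding C_def by (simp only: cc_sum coef_identity[OF k0 n1])
    have d: "(of_nat (n ^ k) - of_nat ((n - 1) ^ k) - 1 :: mpoly fps) = cc ?d"
      by (simp only: of_nat_cc cc_1[symmetric] cc_diff)
    have m0: "cc (- (1 / of_nat k * ?d)) = - (cc (1 / of_nat k) * cc ?d)"
      by (simp add: mconst_mult mconst_uminus)
    have m: "- (cc (1 / of_nat k) * fps_X ^ k * cc ?d) = cc (- (1 / of_nat k * ?d)) * fps_X ^ k"
      by (simp only: m0) (simp add: mult_ac del: fps_const_mult fps_const_neg)
    have "of_nat n * (\<Sum>i\<in>{1..<k}. C i * fps_X ^ k * suminf f) = of_nat n * ((\<Sum>i\<in>{1..<k}. C i) * fps_X ^ k * suminf f)"
      by (simp only: sum_distrib_right)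
    also have "\<dots> = of_nat n * (cc (- (1 / of_nat k * ?d)) * fps_X ^ k * suminf f)"
      by (simp only: s)
    also have "\<dots> = (cc (- (1 / of_nat k * ?d)) * fps_X ^ k) * (of_nat n * suminf f)"
      by (simp only: mult_ac)
    also have "\<dots> = - (cc (1 / of_nat k) * fps_X ^ k * (of_nat (n ^ k) - of_nat ((n - 1) ^ k) - 1)) * (of_nat n * suminf f)"
      by (simp only: d m)
    finally show ?thesis .
  qed
  show ?thesis unfolding cdef
  proof (rule agree_eq)
    fix N
    let ?M = "N + k"
    have MN: "N \<le> ?M" by (rule le_add1)
    have s1: "agree N (suminf f) (\<Sum>j\<le>?M. f j)" by (rule suminf_agree[OF z MN])
    have a1: "agree N (delta k (of_nat n * suminf f)) (delta k (of_nat n * (\<Sum>j\<le>?M. f j)))"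
      by (rule agree_delta[OF agree_mult[OF agree_refl s1]])
    have e1: "delta k (of_nat n * (\<Sum>j\<le>?M. f j)) = of_nat n * (\<Sum>i\<in>{1..<k}. C i * fps_X ^ k * (\<Sum>j\<le>?M - i. f j))"
      by (simp only: of_nat_cc delta_cc_mult dP[OF le_add2])
    have s2: "agree N (\<Sum>j\<le>?M - i. f j) (suminf f)" if "i \<in> {1..<k}" for i
    proof -
      have ik: "i \<le> k" using that by auto
      have "N \<le> ?M - i" by (metis le_add_diff add.commute ik)
      from suminf_agree[OF z this] show ?thesis by (rule agree_sym)
    qed
    have a2: "agree N (of_nat n * (\<Sum>i\<in>{1..<k}. C i * fps_X ^ k * (\<Sum>j\<le>?M - i. f j)))
        (of_nat n * (\<Sum>i\<in>{1..<k}. C i * fps_X ^ k * suminf f))"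
      by (rule agree_mult[OF agree_refl], rule agree_sum, rule agree_mult[OF agree_refl], erule s2)
    show "agree N (delta k (of_nat n * suminf f))
        (- (cc (1 / of_nat k) * fps_X ^ k * (of_nat (n ^ k) - of_nat ((n - 1) ^ k) - 1)) * (of_nat n * suminf f))"
      unfolding key[symmetric] using agree_trans[OF a1[unfolded e1] a2] .
  qed
qed


end
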